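(* Let $(\mathscr{A},\mathscr{E})$ and $(\mathscr{B},\mathscr{F})$ be exact categories and let $L : \mathscr{A} \rightarrow \mathscr{B}$ be an exact functor. Define $\mathscr{E}_L^0 = \{ s \in \mathscr{E} : Ls \text{ is a split exact sequence in } \mathscr{B} \}$. Then $(\mathscr{A},\mathscr{E}_L^0)$ is an exact category.
   Context: An exact category $(\mathscr{A},\mathscr{E})$ is an additive category $\mathscr{A}$ together with a class $\mathscr{E}$ of kernel–cokernel pairs $X \rightarrowtail Y \twoheadrightarrow Z$ (conflations), closed under isomorphism, satisfying Quillen's axioms. An exact functor is an additive functor sending conflations to conflations. A sequence is split exact if it is isomorphic to $X \to X\oplus Z \to Z$ with the canonical inclusion and projection. *)

theory Defs
  imports Main
begin

text \<open>Additive categories are encoded as records: objects of type 'o, morphisms of type 'm,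
  hom-sets Hom a b, composition cmp g f (meaning g after f), identities, and the abelian
  group structure on hom-sets (pls, zro, ngt).\<close>

record ('o, 'm) addcat =
  Ob  :: "'o set"
  Hom :: "'o \<Rightarrow> 'o \<Rightarrow> 'm set"
  cmp :: "'m \<Rightarrow> 'm \<Rightarrow> 'm"
  idm :: "'o \<Rightarrow> 'm"
  pls :: "'m \<Rightarrow> 'm \<Rightarrow> 'm"
  zro :: "'o \<Rightarrow> 'o \<Rightarrow> 'm"
  ngt :: "'m \<Rightarrow> 'm"

type_synonym ('o, 'm) sseq = "'o \<times> 'o \<times> 'o \<times> 'm \<times> 'm"
  \<comment> \<open>(X, Y, Z, i, d) stands for the sequence X --i--> Y --d--> Z\<close>

definition category :: "('o, 'm, 'x) addcat_scheme \<Rightarrow> bool" where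
  "category C \<longleftrightarrow>
     (\<forall>a b f. f \<in> Hom C a b \<longrightarrow> a \<in> Ob C \<and> b \<in> Ob C) \<and>
     (\<forall>a \<in> Ob C. idm C a \<in> Hom C a a) \<and>
     (\<forall>a b c f g. f \<in> Hom C a b \<longrightarrow> g \<in> Hom C b c \<longrightarrow> cmp C g f \<in> Hom C a c) \<and>
     (\<forall>a b c d f g h. f \<in> Hom C a b \<longrightarrow> g \<in> Hom C b c \<longrightarrow> h \<in> Hom C c d \<longrightarrow>
         cmp C h (cmp C g f) = cmp C (cmp C h g) f) \<and>
     (\<forall>a b f. f \<in> Hom C a b \<longrightarrow> cmp C (idm C b) f = f \<and> cmp C f (idm C a) = f)"

definition preadditive :: "('o, 'm, 'x) addcat_scheme \<Rightarrow> bool" where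
  "preadditive C \<longleftrightarrow> category C \<and>
     (\<forall>a \<in> Ob C. \<forall>b \<in> Ob C.
        zro C a b \<in> Hom C a b \<and>
        (\<forall>f \<in> Hom C a b. \<forall>g \<in> Hom C a b. pls C f g \<in> Hom C a b) \<and>
        (\<forall>f \<in> Hom C a b. ngt C f \<in> Hom C a b) \<and>
        (\<forall>f \<in> Hom C a b. \<forall>g \<in> Hom C a b. \<forall>h \<in> Hom C a b.
            pls C (pls C f g) h = pls C f (pls C g h)) \<and>
        (\<forall>f \<in> Hom C a b. \<forall>g \<in> Hom C a b. pls C f g = pls C g f) \<and>
        (\<forall>f \<in> Hom C a b. pls C f (zro C a b) = f) \<and>
        (\<forall>f \<in> Hom C a b. pls C f (ngt C f) = zro C a b)) \<and>
     (\<forall>a b c f f' g. f \<in> Hom C a b \<longrightarrow> f' \<in> Hom C a b \<longrightarrow> g \<in> Hom C b c \<longrightarrow>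
         cmp C g (pls C f f') = pls C (cmp C g f) (cmp C g f')) \<and>
     (\<forall>a b c f g g'. f \<in> Hom C a b \<longrightarrow> g \<in> Hom C b c \<longrightarrow> g' \<in> Hom C b c \<longrightarrow>
         cmp C (pls C g g') f = pls C (cmp C g f) (cmp C g' f))"

definition is_biproduct ::
  "('o, 'm, 'x) addcat_scheme \<Rightarrow> 'o \<Rightarrow> 'o \<Rightarrow> 'o \<Rightarrow> 'm \<Rightarrow> 'm \<Rightarrow> 'm \<Rightarrow> 'm \<Rightarrow> bool" where
  "is_biproduct C a b s i1 i2 p1 p2 \<longleftrightarrow>
     s \<in> Ob C \<and> i1 \<in> Hom C a s \<and> i2 \<in> Hom C b s \<and> p1 \<in> Hom C s a \<and> p2 \<in> Hom C s b \<and>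
     cmp C p1 i1 = idm C a \<and> cmp C p2 i2 = idm C b \<and>
     cmp C p2 i1 = zro C a b \<and> cmp C p1 i2 = zro C b a \<and>
     pls C (cmp C i1 p1) (cmp C i2 p2) = idm C s"

definition additive :: "('o, 'm, 'x) addcat_scheme \<Rightarrow> bool" where
  "additive C \<longleftrightarrow> preadditive C \<and>
     (\<exists>z \<in> Ob C. idm C z = zro C z z) \<and>
     (\<forall>a \<in> Ob C. \<forall>b \<in> Ob C. \<exists>s i1 i2 p1 p2. is_biproduct C a b s i1 i2 p1 p2)"

definition iso :: "('o, 'm, 'x) addcat_scheme \<Rightarrow> 'o \<Rightarrow> 'o \<Rightarrow> 'm \<Rightarrow> bool" where
  "iso C a b f \<longleftrightarrow> f \<in> Hom C a b \<and>
     (\<exists>g \<in> Hom C b a. cmp C g f = idm C a \<and> cmp C f g = idm C b)"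

definition is_kernel ::
  "('o, 'm, 'x) addcat_scheme \<Rightarrow> 'o \<Rightarrow> 'o \<Rightarrow> 'o \<Rightarrow> 'm \<Rightarrow> 'm \<Rightarrow> bool" where
  "is_kernel C x y z i d \<longleftrightarrow> i \<in> Hom C x y \<and> d \<in> Hom C y z \<and> cmp C d i = zro C x z \<and>
     (\<forall>w \<in> Ob C. \<forall>g \<in> Hom C w y. cmp C d g = zro C w z \<longrightarrow>
        (\<exists>!h. h \<in> Hom C w x \<and> cmp C i h = g))"

definition is_cokernel ::
  "('o, 'm, 'x) addcat_scheme \<Rightarrow> 'o \<Rightarrow> 'o \<Rightarrow> 'o \<Rightarrow> 'm \<Rightarrow> 'm \<Rightarrow> bool" where
  "is_cokernel C x y z i d \<longleftrightarrow> i \<in> Hom C x y \<and> d \<in> Hom C y z \<and> cmp C d i = zro C x z \<and>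
     (\<forall>w \<in> Ob C. \<forall>g \<in> Hom C y w. cmp C g i = zro C x w \<longrightarrow>
        (\<exists>!h. h \<in> Hom C z w \<and> cmp C h d = g))"

definition kc_pair :: "('o, 'm, 'x) addcat_scheme \<Rightarrow> ('o, 'm) sseq \<Rightarrow> bool" where
  "kc_pair C s \<longleftrightarrow> (case s of (x, y, z, i, d) \<Rightarrow> is_kernel C x y z i d \<and> is_cokernel C x y z i d)"

definition iso_seq :: "('o, 'm, 'x) addcat_scheme \<Rightarrow> ('o, 'm) sseq \<Rightarrow> ('o, 'm) sseq \<Rightarrow> bool" where
  "iso_seq C s t \<longleftrightarrow>
     (case s of (x, y, z, i, d) \<Rightarrow> case t of (x', y', z', i', d') \<Rightarrow>
        i \<in> Hom C x y \<and> d \<in> Hom C y z \<and> i' \<in> Hom C x' y' \<and> d' \<in> Hom C y' z' \<and>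
        (\<exists>a b c. iso C x x' a \<and> iso C y y' b \<and> iso C z z' c \<and>
                 cmp C b i = cmp C i' a \<and> cmp C c d = cmp C d' b))"

definition adm_mono :: "('o, 'm, 'x) addcat_scheme \<Rightarrow> ('o, 'm) sseq set \<Rightarrow> 'o \<Rightarrow> 'o \<Rightarrow> 'm \<Rightarrow> bool" where
  "adm_mono C E x y i \<longleftrightarrow> (\<exists>z d. (x, y, z, i, d) \<in> E)"

definition adm_epi :: "('o, 'm, 'x) addcat_scheme \<Rightarrow> ('o, 'm) sseq set \<Rightarrow> 'o \<Rightarrow> 'o \<Rightarrow> 'm \<Rightarrow> bool" where
  "adm_epi C E y z d \<longleftrightarrow> (\<exists>x i. (x, y, z, i, d) \<in> E)"

definition is_pushout ::
  "('o, 'm, 'x) addcat_scheme \<Rightarrow> 'o \<Rightarrow> 'o \<Rightarrow> 'o \<Rightarrow> 'o \<Rightarrow> 'm \<Rightarrow> 'm \<Rightarrow> 'm \<Rightarrow> 'm \<Rightarrow> bool" where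
  "is_pushout C x y x' y' i f i' f' \<longleftrightarrow>
     i \<in> Hom C x y \<and> f \<in> Hom C x x' \<and> i' \<in> Hom C x' y' \<and> f' \<in> Hom C y y' \<and>
     cmp C f' i = cmp C i' f \<and>
     (\<forall>w \<in> Ob C. \<forall>g \<in> Hom C y w. \<forall>h \<in> Hom C x' w. cmp C g i = cmp C h f \<longrightarrow>
        (\<exists>!u. u \<in> Hom C y' w \<and> cmp C u f' = g \<and> cmp C u i' = h))"

definition is_pullback ::
  "('o, 'm, 'x) addcat_scheme \<Rightarrow> 'o \<Rightarrow> 'o \<Rightarrow> 'o \<Rightarrow> 'o \<Rightarrow> 'm \<Rightarrow> 'm \<Rightarrow> 'm \<Rightarrow> 'm \<Rightarrow> bool" where
  "is_pullback C y z y' z' d f d' f' \<longleftrightarrow>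
     d \<in> Hom C y z \<and> f \<in> Hom C z' z \<and> d' \<in> Hom C y' z' \<and> f' \<in> Hom C y' y \<and>
     cmp C d f' = cmp C f d' \<and>
     (\<forall>w \<in> Ob C. \<forall>g \<in> Hom C w y. \<forall>h \<in> Hom C w z'. cmp C d g = cmp C f h \<longrightarrow>
        (\<exists>!u. u \<in> Hom C w y' \<and> cmp C f' u = g \<and> cmp C d' u = h))"

definition exact_category :: "('o, 'm, 'x) addcat_scheme \<Rightarrow> ('o, 'm) sseq set \<Rightarrow> bool" where
  "exact_category C E \<longleftrightarrow>
     additive C \<and>
     (\<forall>s \<in> E. kc_pair C s) \<and>
     (\<forall>s \<in> E. \<forall>t. iso_seq C s t \<longrightarrow> t \<in> E) \<and>
     \<comment> \<open>[E0], [E0 op]\<close>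
     (\<forall>a \<in> Ob C. adm_mono C E a a (idm C a)) \<and>
     (\<forall>a \<in> Ob C. adm_epi C E a a (idm C a)) \<and>
     \<comment> \<open>[E1], [E1 op]\<close>
     (\<forall>x y w i j. adm_mono C E x y i \<longrightarrow> adm_mono C E y w j \<longrightarrow> adm_mono C E x w (cmp C j i)) \<and>
     (\<forall>x y w d e. adm_epi C E x y d \<longrightarrow> adm_epi C E y w e \<longrightarrow> adm_epi C E x w (cmp C e d)) \<and>
     \<comment> \<open>[E2]: pushouts of admissible monics exist and are admissible monics\<close>
     (\<forall>x y x' i f. adm_mono C E x y i \<longrightarrow> f \<in> Hom C x x' \<longrightarrow>
        (\<exists>y' i' f'. is_pushout C x y x' y' i f i' f' \<and> adm_mono C E x' y' i')) \<and>
     \<comment> \<open>[E2 op]: pullbacks of admissible epics exist and are admissible epics\<close>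
     (\<forall>y z z' d f. adm_epi C E y z d \<longrightarrow> f \<in> Hom C z' z \<longrightarrow>
        (\<exists>y' d' f'. is_pullback C y z y' z' d f d' f' \<and> adm_epi C E y' z' d'))"

definition additive_functor ::
  "('o, 'm, 'x) addcat_scheme \<Rightarrow> ('p, 'n, 'y) addcat_scheme \<Rightarrow> ('o \<Rightarrow> 'p) \<Rightarrow> ('m \<Rightarrow> 'n) \<Rightarrow> bool" where
  "additive_functor A B LO LM \<longleftrightarrow>
     (\<forall>a \<in> Ob A. LO a \<in> Ob B) \<and>
     (\<forall>a b f. f \<in> Hom A a b \<longrightarrow> LM f \<in> Hom B (LO a) (LO b)) \<and>
     (\<forall>a \<in> Ob A. LM (idm A a) = idm B (LO a)) \<and>
     (\<forall>a b c f g. f \<in> Hom A a b \<longrightarrow> g \<in> Hom A b c \<longrightarrow> LM (cmp A g f) = cmp B (LM g) (LM f)) \<and>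
     (\<forall>a b f g. f \<in> Hom A a b \<longrightarrow> g \<in> Hom A a b \<longrightarrow> LM (pls A f g) = pls B (LM f) (LM g))"

definition map_seq :: "('o \<Rightarrow> 'p) \<Rightarrow> ('m \<Rightarrow> 'n) \<Rightarrow> ('o, 'm) sseq \<Rightarrow> ('p, 'n) sseq" where
  "map_seq LO LM s = (case s of (x, y, z, i, d) \<Rightarrow> (LO x, LO y, LO z, LM i, LM d))"

definition exact_functor ::
  "('o, 'm, 'x) addcat_scheme \<Rightarrow> ('o, 'm) sseq set \<Rightarrow> ('p, 'n, 'y) addcat_scheme \<Rightarrow> ('p, 'n) sseq set
     \<Rightarrow> ('o \<Rightarrow> 'p) \<Rightarrow> ('m \<Rightarrow> 'n) \<Rightarrow> bool" where
  "exact_functor A E B F LO LM \<longleftrightarrow> additive_functor A B LO LM \<and>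
     (\<forall>s \<in> E. map_seq LO LM s \<in> F)"

definition split_exact :: "('o, 'm, 'x) addcat_scheme \<Rightarrow> ('o, 'm) sseq \<Rightarrow> bool" where
  "split_exact C s \<longleftrightarrow> (case s of (x, y, z, i, d) \<Rightarrow>
     (\<exists>S i1 i2 p1 p2. is_biproduct C x z S i1 i2 p1 p2 \<and> iso_seq C s (x, S, z, i1, p2)))"

definition E_L0 ::
  "('o, 'm) sseq set \<Rightarrow> ('p, 'n, 'y) addcat_scheme \<Rightarrow> ('o \<Rightarrow> 'p) \<Rightarrow> ('m \<Rightarrow> 'n) \<Rightarrow> ('o, 'm) sseq set" where
  "E_L0 E B LO LM = {s \<in> E. split_exact B (map_seq LO LM s)}"

end

theory Submission imports Defs begin

locale padd = fixes C :: "('o,'m,'x) addcat_scheme" assumes pa: "preadditive C"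
begin
lemmas P = pa[unfolded preadditive_def, THEN conjunct1]
   pa[unfolded preadditive_def, THEN conjunct2, THEN conjunct1]
   pa[unfolded preadditive_def, THEN conjunct2, THEN conjunct2, THEN conjunct1]
   pa[unfolded preadditive_def, THEN conjunct2, THEN conjunct2, THEN conjunct2]
lemmas Cat = P(1)[unfolded category_def, THEN conjunct1]
   P(1)[unfolded category_def, THEN conjunct2, THEN conjunct1]
   P(1)[unfolded category_def, THEN conjunct2, THEN conjunct2, THEN conjunct1]
   P(1)[unfolded category_def, THEN conjunct2, THEN conjunct2, THEN conjunct2, THEN conjunct1]
   P(1)[unfolded category_def, THEN conjunct2, THEN conjunct2, THEN conjunct2, THEN conjunct2]
lemma hom_ob: "f \<in> Hom C a b \<Longrightarrow> a \<in> Ob C \<and> b \<in> Ob C" using Cat(1) by blast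
lemma ab: "f \<in> Hom C a b \<Longrightarrow> a \<in> Ob C" "f \<in> Hom C a b \<Longrightarrow> b \<in> Ob C" using hom_ob by auto
lemma id_hom: "a \<in> Ob C \<Longrightarrow> idm C a \<in> Hom C a a" using Cat(2) by blast
lemma cmp_hom: "f \<in> Hom C a b \<Longrightarrow> g \<in> Hom C b c \<Longrightarrow> cmp C g f \<in> Hom C a c"
  using Cat(3) by blast
lemma assoc: "f \<in> Hom C a b \<Longrightarrow> g \<in> Hom C b c \<Longrightarrow> h \<in> Hom C c d \<Longrightarrow>
   cmp C h (cmp C g f) = cmp C (cmp C h g) f" using Cat(4) by blast
lemma id_l: "f \<in> Hom C a b \<Longrightarrow> cmp C (idm C b) f = f" using Cat(5) by blast
lemma id_r: "f \<in> Hom C a b \<Longrightarrow> cmp C f (idm C a) = f" using Cat(5) by blast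
lemma distl: "f \<in> Hom C a b \<Longrightarrow> f' \<in> Hom C a b \<Longrightarrow> g \<in> Hom C b c \<Longrightarrow>
         cmp C g (pls C f f') = pls C (cmp C g f) (cmp C g f')" using P(3) by blast
lemma distr: "f \<in> Hom C a b \<Longrightarrow> g \<in> Hom C b c \<Longrightarrow> g' \<in> Hom C b c \<Longrightarrow>
         cmp C (pls C g g') f = pls C (cmp C g f) (cmp C g' f)" using P(4) by blast
lemma G: assumes "f \<in> Hom C a b" shows "zro C a b \<in> Hom C a b" 
   "(\<forall>f \<in> Hom C a b. \<forall>g \<in> Hom C a b. pls C f g \<in> Hom C a b)"
   "(\<forall>f \<in> Hom C a b. ngt C f \<in> Hom C a b)"
   "(\<forall>f \<in> Hom C a b. \<forall>g \<in> Hom C a b. \<forall>h \<in> Hom C a b.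
            pls C (pls C f g) h = pls C f (pls C g h))"
   "(\<forall>f \<in> Hom C a b. \<forall>g \<in> Hom C a b. pls C f g = pls C g f)"
   "(\<forall>f \<in> Hom C a b. pls C f (zro C a b) = f)"
   "(\<forall>f \<in> Hom C a b. pls C f (ngt C f) = zro C a b)"
  using P(2) ab[OF assms] by (meson)+
lemma zro_hom: "a \<in> Ob C \<Longrightarrow> b \<in> Ob C \<Longrightarrow> zro C a b \<in> Hom C a b" using P(2) by blast
lemma pls_hom: "f \<in> Hom C a b \<Longrightarrow> g \<in> Hom C a b \<Longrightarrow> pls C f g \<in> Hom C a b"
  using G(2) by blast
lemma ngt_hom: "f \<in> Hom C a b \<Longrightarrow> ngt C f \<in> Hom C a b" using G(3) by blast
lemma pls_assoc: "f \<in> Hom C a b \<Longrightarrow> g \<in> Hom C a b \<Longrightarrow> h \<in> Hom C a b \<Longrightarrow>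
   pls C (pls C f g) h = pls C f (pls C g h)" using G(4) by blast
lemma pls_comm: "f \<in> Hom C a b \<Longrightarrow> g \<in> Hom C a b \<Longrightarrow> pls C f g = pls C g f" using G(5) by blast
lemma pls_zro: "f \<in> Hom C a b \<Longrightarrow> pls C f (zro C a b) = f" using G(6) by blast
lemma pls_ngt: "f \<in> Hom C a b \<Longrightarrow> pls C f (ngt C f) = zro C a b" using G(7) by blast
lemma zro_pls: "f \<in> Hom C a b \<Longrightarrow> pls C (zro C a b) f = f"
  by (metis G(1) pls_comm pls_zro)
lemma self_zero: assumes "x \<in> Hom C a b" "pls C x x = x" shows "x = zro C a b"
proof -
  have "x = pls C x (zro C a b)" using pls_zro[OF assms(1)] by simp
  also have "\<dots> = pls C x (pls C x (ngt C x))" using pls_ngt[OF assms(1)] by simp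
  also have "\<dots> = pls C (pls C x x) (ngt C x)" using pls_assoc[OF assms(1) assms(1) ngt_hom[OF assms(1)]] by simp
  also have "\<dots> = zro C a b" using assms(2) pls_ngt[OF assms(1)] by simp
  finally show ?thesis .
qed
lemma neg_unique: assumes "x \<in> Hom C a b" "y \<in> Hom C a b" "pls C x y = zro C a b" shows "y = ngt C x"
proof -
  have n: "ngt C x \<in> Hom C a b" using ngt_hom[OF assms(1)] .
  have "y = pls C y (zro C a b)" using pls_zro[OF assms(2)] by simp
  also have "\<dots> = pls C y (pls C x (ngt C x))" using pls_ngt[OF assms(1)] by simp
  also have "\<dots> = pls C (pls C y x) (ngt C x)" using pls_assoc[OF assms(2) assms(1) n] by simp
  also have "\<dots> = pls C (zro C a b) (ngt C x)" using pls_comm[OF assms(1) assms(2)] assms(3) by simp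
  also have "\<dots> = ngt C x" using zro_pls[OF n] .
  finally show ?thesis .
qed
lemma cmp_zro_l: assumes "f \<in> Hom C a b" "c \<in> Ob C" shows "cmp C (zro C b c) f = zro C a c"
proof -
  have b: "b \<in> Ob C" "a \<in> Ob C" using hom_ob assms by auto
  have z: "zro C b c \<in> Hom C b c" using zro_hom[OF b(1) assms(2)] .
  have h: "cmp C (zro C b c) f \<in> Hom C a c" using cmp_hom[OF assms(1) z] .
  have "cmp C (zro C b c) f = cmp C (pls C (zro C b c) (zro C b c)) f"
    using pls_zro[OF z] by simp
  also have "\<dots> = pls C (cmp C (zro C b c) f) (cmp C (zro C b c) f)"
    using distr[OF assms(1) z z] .
  finally show ?thesis using self_zero[OF h] by simp
qed
lemma cmp_zro_r: assumes "g \<in> Hom C b c" "a \<in> Ob C" shows "cmp C g (zro C a b) = zro C a c"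
proof -
  have b: "b \<in> Ob C" "c \<in> Ob C" using hom_ob assms by auto
  have z: "zro C a b \<in> Hom C a b" using zro_hom[OF assms(2) b(1)] .
  have h: "cmp C g (zro C a b) \<in> Hom C a c" using cmp_hom[OF z assms(1)] .
  have "cmp C g (zro C a b) = cmp C g (pls C (zro C a b) (zro C a b))"
    using pls_zro[OF z] by simp
  also have "\<dots> = pls C (cmp C g (zro C a b)) (cmp C g (zro C a b))"
    using distl[OF z z assms(1)] .
  finally show ?thesis using self_zero[OF h] by simp
qed
lemma cmp_ngt_l: assumes "f \<in> Hom C a b" "g \<in> Hom C b c" shows "cmp C (ngt C g) f = ngt C (cmp C g f)"
proof -
  have b: "a \<in> Ob C" using hom_ob assms by auto
  have n: "ngt C g \<in> Hom C b c" using ngt_hom[OF assms(2)] .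
  have "pls C (cmp C g f) (cmp C (ngt C g) f) = cmp C (pls C g (ngt C g)) f"
    using distr[OF assms(1) assms(2) n] by simp
  also have "\<dots> = zro C a c" using pls_ngt[OF assms(2)] cmp_zro_l[OF assms(1)] ab(2)[OF assms(2)] by simp
  finally show ?thesis using neg_unique[OF cmp_hom[OF assms] cmp_hom[OF assms(1) n]] by simp
qed
lemma cmp_ngt_r: assumes "f \<in> Hom C a b" "g \<in> Hom C b c" shows "cmp C g (ngt C f) = ngt C (cmp C g f)"
proof -
  have n: "ngt C f \<in> Hom C a b" using ngt_hom[OF assms(1)] .
  have "pls C (cmp C g f) (cmp C g (ngt C f)) = cmp C g (pls C f (ngt C f))"
    using distl[OF assms(1) n assms(2)] by simp
  also have "\<dots> = zro C a c" using pls_ngt[OF assms(1)] cmp_zro_r[OF assms(2)] ab(1)[OF assms(1)] by simp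
  finally show ?thesis using neg_unique[OF cmp_hom[OF assms] cmp_hom[OF n assms(2)]] by simp
qed
lemma ngt_zro: assumes "a \<in> Ob C" "b \<in> Ob C" shows "ngt C (zro C a b) = zro C a b"
  using neg_unique[OF zro_hom[OF assms] zro_hom[OF assms] pls_zro[OF zro_hom[OF assms]]] by simp

lemma epi: assumes "is_cokernel C x y z i d" "g \<in> Hom C z w" "g' \<in> Hom C z w" "cmp C g d = cmp C g' d"
  shows "g = g'"
proof -
  have i: "i \<in> Hom C x y" "d \<in> Hom C y z" "cmp C d i = zro C x z" using assms(1) unfolding is_cokernel_def by auto
  note U = assms(1)[unfolded is_cokernel_def, THEN conjunct2, THEN conjunct2, THEN conjunct2]
  have w: "w \<in> Ob C" "x \<in> Ob C" using ab assms(2) i(1) by auto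
  have G: "cmp C g d \<in> Hom C y w" using cmp_hom[OF i(2) assms(2)] .
  have "cmp C (cmp C g d) i = zro C x w" using assoc[OF i(1) i(2) assms(2)] i(3) cmp_zro_r[OF assms(2) w(2)] by simp
  then have "\<exists>!h. h \<in> Hom C z w \<and> cmp C h d = cmp C g d" using U[rule_format, OF w(1) G] by simp
  then obtain h0 where "\<forall>h. h \<in> Hom C z w \<and> cmp C h d = cmp C g d \<longrightarrow> h = h0" by blast
  then show ?thesis using assms(2,3,4) by metis
qed
lemma mono: assumes "is_kernel C x y z i d" "g \<in> Hom C w x" "g' \<in> Hom C w x" "cmp C i g = cmp C i g'"
  shows "g = g'"
proof -
  have i: "i \<in> Hom C x y" "d \<in> Hom C y z" "cmp C d i = zro C x z" using assms(1) unfolding is_kernel_def by auto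
  note U = assms(1)[unfolded is_kernel_def, THEN conjunct2, THEN conjunct2, THEN conjunct2]
  have w: "w \<in> Ob C" "z \<in> Ob C" using ab assms(2) i(2) by auto
  have G: "cmp C i g \<in> Hom C w y" using cmp_hom[OF assms(2) i(1)] .
  have "cmp C d (cmp C i g) = zro C w z" using assoc[OF assms(2) i(1) i(2)] i(3) cmp_zro_l[OF assms(2) w(2)] by simp
  then have "\<exists>!h. h \<in> Hom C w x \<and> cmp C i h = cmp C i g" using U[rule_format, OF w(1) G] by simp
  then obtain h0 where "\<forall>h. h \<in> Hom C w x \<and> cmp C i h = cmp C i g \<longrightarrow> h = h0" by blast
  then show ?thesis using assms(2,3,4) by metis
qed
lemma iso_id: assumes "a \<in> Ob C" shows "iso C a a (idm C a)"
  unfolding iso_def using id_hom[OF assms] id_l[OF id_hom[OF assms]] by blast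
lemma iso_seq_refl: assumes "i \<in> Hom C X Y" "d \<in> Hom C Y Z" shows "iso_seq C (X,Y,Z,i,d) (X,Y,Z,i,d)"
proof -
  have ob: "X \<in> Ob C" "Y \<in> Ob C" "Z \<in> Ob C" using ab assms by auto
  show ?thesis unfolding iso_seq_def prod.case
    apply (intro conjI assms)
    apply (rule exI[of _ "idm C X"], rule exI[of _ "idm C Y"], rule exI[of _ "idm C Z"])
    using id_l[OF assms(1)] id_r[OF assms(1)] id_l[OF assms(2)] id_r[OF assms(2)] iso_id[OF ob(1)]
      iso_id[OF ob(2)] iso_id[OF ob(3)] by simp
qed

lemma split_ret: assumes kc: "kc_pair C (X,Y,Z,i,d)" and r: "r \<in> Hom C Y X" "cmp C r i = idm C X"
  shows "split_exact C (X,Y,Z,i,d)"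
proof -
  have K: "is_kernel C X Y Z i d" and Q: "is_cokernel C X Y Z i d" using kc unfolding kc_pair_def by auto
  have i: "i \<in> Hom C X Y" "d \<in> Hom C Y Z" "cmp C d i = zro C X Z" using K unfolding is_kernel_def by auto
  have ob: "X \<in> Ob C" "Y \<in> Ob C" "Z \<in> Ob C" using i ab by auto
  define ir where "ir = cmp C i r"
  have irh: "ir \<in> Hom C Y Y" unfolding ir_def using cmp_hom[OF r(1) i(1)] .
  define e where "e = pls C (idm C Y) (ngt C ir)"
  have eh: "e \<in> Hom C Y Y" unfolding e_def using pls_hom[OF id_hom[OF ob(2)] ngt_hom[OF irh]] .
  have iri: "cmp C ir i = i" unfolding ir_def
    using assoc[OF i(1) r(1) i(1)] r(2) id_r[OF i(1)] by simp
  have "cmp C e i = pls C (cmp C (idm C Y) i) (cmp C (ngt C ir) i)"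
    unfolding e_def using distr[OF i(1) id_hom[OF ob(2)] ngt_hom[OF irh]] .
  also have "\<dots> = pls C i (ngt C i)" using id_l[OF i(1)] cmp_ngt_l[OF i(1) irh] iri by simp
  also have "\<dots> = zro C X Y" using pls_ngt i by blast
  finally have ei: "cmp C e i = zro C X Y" .
  note U = Q[unfolded is_cokernel_def, THEN conjunct2, THEN conjunct2, THEN conjunct2]
  obtain s where s: "s \<in> Hom C Z Y" "cmp C s d = e" using U[rule_format, OF ob(2) eh ei] by blast
  have dir: "cmp C d ir = zro C Y Z" unfolding ir_def
    using assoc[OF r(1) i(1) i(2)] i(3) cmp_zro_l[OF r(1) ob(3)] by simp
  have "cmp C d e = pls C (cmp C d (idm C Y)) (cmp C d (ngt C ir))"
    unfolding e_def using distl[OF id_hom[OF ob(2)] ngt_hom[OF irh] i(2)] .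
  also have "\<dots> = d" using id_r[OF i(2)] cmp_ngt_r[OF irh i(2)] dir ngt_zro[OF ob(2) ob(3)] pls_zro[OF i(2)] by simp
  finally have de: "cmp C d e = d" .
  have ds: "cmp C d s = idm C Z"
  proof (rule epi[OF Q])
    show "cmp C d s \<in> Hom C Z Z" using s i cmp_hom by blast
    show "idm C Z \<in> Hom C Z Z" using id_hom ob by blast
    show "cmp C (cmp C d s) d = cmp C (idm C Z) d" using de s(2) assoc[OF i(2) s(1) i(2)] id_l[OF i(2)] by simp
  qed
  have rir: "cmp C r ir = r" unfolding ir_def using assoc[OF r(1) i(1) r(1)] r(2) id_l[OF r(1)] by simp
  have "cmp C r e = pls C (cmp C r (idm C Y)) (cmp C r (ngt C ir))"
    unfolding e_def using distl[OF id_hom[OF ob(2)] ngt_hom[OF irh] r(1)] .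
  also have "\<dots> = zro C Y X" using id_r[OF r(1)] cmp_ngt_r[OF irh r(1)] rir pls_ngt[OF r(1)] by simp
  finally have re: "cmp C r e = zro C Y X" .
  have rs: "cmp C r s = zro C Z X"
  proof (rule epi[OF Q])
    show "cmp C r s \<in> Hom C Z X" using s r cmp_hom by blast
    show "zro C Z X \<in> Hom C Z X" using zro_hom ob by blast
    show "cmp C (cmp C r s) d = cmp C (zro C Z X) d"
      using re s(2) assoc[OF i(2) s(1) r(1)] cmp_zro_l[OF i(2) ob(1)] by simp
  qed
  have "pls C (cmp C i r) (cmp C s d) = pls C ir (pls C (ngt C ir) (idm C Y))"
    unfolding ir_def[symmetric] s(2) e_def using pls_comm[OF id_hom[OF ob(2)] ngt_hom[OF irh]] by simp
  also have "\<dots> = pls C (pls C ir (ngt C ir)) (idm C Y)"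
    using pls_assoc[OF irh ngt_hom[OF irh] id_hom[OF ob(2)]] by simp
  also have "\<dots> = idm C Y" using pls_ngt[OF irh] zro_pls[OF id_hom[OF ob(2)]] by simp
  finally have sum: "pls C (cmp C i r) (cmp C s d) = idm C Y" .
  have "is_biproduct C X Z Y i s r d" unfolding is_biproduct_def
    using ob(2) i(1,2,3) s(1) r(1,2) ds rs sum by (intro conjI)
  then show ?thesis unfolding split_exact_def prod.case using iso_seq_refl[OF i(1) i(2)] by (intro exI conjI)
qed

lemma split_sec: assumes kc: "kc_pair C (X,Y,Z,i,d)" and s: "s \<in> Hom C Z Y" "cmp C d s = idm C Z"
  shows "split_exact C (X,Y,Z,i,d)"
proof -
  have K: "is_kernel C X Y Z i d" and Q: "is_cokernel C X Y Z i d" using kc unfolding kc_pair_def by auto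
  have i: "i \<in> Hom C X Y" "d \<in> Hom C Y Z" "cmp C d i = zro C X Z" using K unfolding is_kernel_def by auto
  have ob: "X \<in> Ob C" "Y \<in> Ob C" "Z \<in> Ob C" using i ab by auto
  define sd where "sd = cmp C s d"
  have sdh: "sd \<in> Hom C Y Y" unfolding sd_def using cmp_hom[OF i(2) s(1)] .
  define e where "e = pls C (idm C Y) (ngt C sd)"
  have eh: "e \<in> Hom C Y Y" unfolding e_def using pls_hom[OF id_hom[OF ob(2)] ngt_hom[OF sdh]] .
  have dsd: "cmp C d sd = d" unfolding sd_def using assoc[OF i(2) s(1) i(2)] s(2) id_l[OF i(2)] by simp
  have "cmp C d e = pls C (cmp C d (idm C Y)) (cmp C d (ngt C sd))"
    unfolding e_def using distl[OF id_hom[OF ob(2)] ngt_hom[OF sdh] i(2)] .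
  also have "\<dots> = pls C d (ngt C d)" using id_r[OF i(2)] cmp_ngt_r[OF sdh i(2)] dsd by simp
  also have "\<dots> = zro C Y Z" using pls_ngt[OF i(2)] .
  finally have de: "cmp C d e = zro C Y Z" .
  note U = K[unfolded is_kernel_def, THEN conjunct2, THEN conjunct2, THEN conjunct2]
  obtain r where r: "r \<in> Hom C Y X" "cmp C i r = e" using U[rule_format, OF ob(2) eh de] by blast
  have sdi: "cmp C sd i = zro C X Y" unfolding sd_def
    using assoc[OF i(1) i(2) s(1)] i(3) cmp_zro_r[OF s(1) ob(1)] by simp
  have "cmp C e i = pls C (cmp C (idm C Y) i) (cmp C (ngt C sd) i)"
    unfolding e_def using distr[OF i(1) id_hom[OF ob(2)] ngt_hom[OF sdh]] .
  also have "\<dots> = i" using id_l[OF i(1)] cmp_ngt_l[OF i(1) sdh] sdi ngt_zro[OF ob(1) ob(2)] pls_zro[OF i(1)] by simp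
  finally have ei: "cmp C e i = i" .
  have ri: "cmp C r i = idm C X"
  proof (rule mono[OF K])
    show "cmp C r i \<in> Hom C X X" using cmp_hom[OF i(1) r(1)] .
    show "idm C X \<in> Hom C X X" using id_hom[OF ob(1)] .
    show "cmp C i (cmp C r i) = cmp C i (idm C X)" using ei r(2) assoc[OF i(1) r(1) i(1)] id_r[OF i(1)] by simp
  qed
  have sds: "cmp C sd s = s" unfolding sd_def using assoc[OF s(1) i(2) s(1)] s(2) id_r[OF s(1)] by simp
  have "cmp C e s = pls C (cmp C (idm C Y) s) (cmp C (ngt C sd) s)"
    unfolding e_def using distr[OF s(1) id_hom[OF ob(2)] ngt_hom[OF sdh]] .
  also have "\<dots> = zro C Z Y" using id_l[OF s(1)] cmp_ngt_l[OF s(1) sdh] sds pls_ngt[OF s(1)] by simp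
  finally have es: "cmp C e s = zro C Z Y" .
  have rs: "cmp C r s = zro C Z X"
  proof (rule mono[OF K])
    show "cmp C r s \<in> Hom C Z X" using cmp_hom[OF s(1) r(1)] .
    show "zro C Z X \<in> Hom C Z X" using zro_hom[OF ob(3) ob(1)] .
    show "cmp C i (cmp C r s) = cmp C i (zro C Z X)"
      using es r(2) assoc[OF s(1) r(1) i(1)] cmp_zro_r[OF i(1) ob(3)] by simp
  qed
  have "pls C (cmp C i r) (cmp C s d) = pls C (idm C Y) (pls C (ngt C sd) sd)"
    unfolding sd_def[symmetric] r(2) e_def using pls_assoc[OF id_hom[OF ob(2)] ngt_hom[OF sdh] sdh] by simp
  also have "\<dots> = pls C (idm C Y) (pls C sd (ngt C sd))" using pls_comm[OF sdh ngt_hom[OF sdh]] by simp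
  also have "\<dots> = idm C Y" using pls_ngt[OF sdh] pls_zro[OF id_hom[OF ob(2)]] by simp
  finally have sum: "pls C (cmp C i r) (cmp C s d) = idm C Y" .
  have "is_biproduct C X Z Y i s r d" unfolding is_biproduct_def
    using ob(2) i(1,2,3) s(1,2) r(1) ri rs sum by (intro conjI)
  then show ?thesis unfolding split_exact_def prod.case using iso_seq_refl[OF i(1) i(2)] by (intro exI conjI)
qed

lemma split_has: assumes "split_exact C (X,Y,Z,i,d)"
  shows "\<exists>r\<in>Hom C Y X. cmp C r i = idm C X" "\<exists>s\<in>Hom C Z Y. cmp C d s = idm C Z"
proof -
  obtain S i1 i2 p1 p2 where bp: "is_biproduct C X Z S i1 i2 p1 p2" and
     isq: "iso_seq C (X,Y,Z,i,d) (X,S,Z,i1,p2)" using assms unfolding split_exact_def by auto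
  have bh: "i1 \<in> Hom C X S" "i2 \<in> Hom C Z S" "p1 \<in> Hom C S X" "p2 \<in> Hom C S Z"
     "cmp C p1 i1 = idm C X" "cmp C p2 i2 = idm C Z" using bp unfolding is_biproduct_def by auto
  obtain a b c where i: "i \<in> Hom C X Y" "d \<in> Hom C Y Z" and abc: "iso C X X a" "iso C Y S b" "iso C Z Z c"
    and cm: "cmp C b i = cmp C i1 a" "cmp C c d = cmp C p2 b" using isq unfolding iso_seq_def by auto
  obtain a' where a: "a \<in> Hom C X X" "a' \<in> Hom C X X" "cmp C a' a = idm C X" using abc unfolding iso_def by auto
  obtain b' where b: "b \<in> Hom C Y S" "b' \<in> Hom C S Y" "cmp C b b' = idm C S" using abc unfolding iso_def by auto
  obtain c' where c: "c \<in> Hom C Z Z" "c' \<in> Hom C Z Z" "cmp C c' c = idm C Z" using abc unfolding iso_def by auto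
  have pb: "cmp C p1 b \<in> Hom C Y X" using cmp_hom[OF b(1) bh(3)] .
  have rh: "cmp C a' (cmp C p1 b) \<in> Hom C Y X" using cmp_hom[OF pb a(2)] .
  have "cmp C (cmp C a' (cmp C p1 b)) i = cmp C a' (cmp C (cmp C p1 b) i)"
    using assoc[OF i(1) pb a(2)] by simp
  also have "\<dots> = cmp C a' (cmp C p1 (cmp C b i))" using assoc[OF i(1) b(1) bh(3)] by simp
  also have "\<dots> = cmp C a' (cmp C (cmp C p1 i1) a)" using cm(1) assoc[OF a(1) bh(1) bh(3)] by simp
  also have "\<dots> = idm C X" using bh(5) id_l[OF a(1)] a(3) by simp
  finally show "\<exists>r\<in>Hom C Y X. cmp C r i = idm C X" using rh by blast
  have "d = cmp C (cmp C c' c) d" using c(3) id_l[OF i(2)] by simp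
  also have "\<dots> = cmp C c' (cmp C p2 b)" using assoc[OF i(2) c(1) c(2)] cm(2) by simp
  finally have dd: "d = cmp C c' (cmp C p2 b)" .
  have p2b: "cmp C p2 b \<in> Hom C Y Z" using cmp_hom[OF b(1) bh(4)] .
  have "cmp C d b' = cmp C c' (cmp C (cmp C p2 b) b')" using dd assoc[OF b(2) p2b c(2)] by simp
  also have "\<dots> = cmp C c' p2" using assoc[OF b(2) b(1) bh(4)] b(3) id_r[OF bh(4)] by simp
  finally have db: "cmp C d b' = cmp C c' p2" .
  have ic: "cmp C i2 c \<in> Hom C Z S" using cmp_hom[OF c(1) bh(2)] .
  have sh: "cmp C b' (cmp C i2 c) \<in> Hom C Z Y" using cmp_hom[OF ic b(2)] .
  have "cmp C d (cmp C b' (cmp C i2 c)) = cmp C (cmp C d b') (cmp C i2 c)"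
    using assoc[OF ic b(2) i(2)] by simp
  also have "\<dots> = cmp C c' (cmp C p2 (cmp C i2 c))" using db assoc[OF ic bh(4) c(2)] by simp
  also have "\<dots> = cmp C c' (cmp C (cmp C p2 i2) c)" using assoc[OF c(1) bh(2) bh(4)] by simp
  also have "\<dots> = idm C Z" using bh(6) id_l[OF c(1)] c(3) by simp
  finally show "\<exists>s\<in>Hom C Z Y. cmp C d s = idm C Z" using sh by blast
qed
end

lemma E_L0_mem: "s \<in> E_L0 E B LO LM \<longleftrightarrow> s \<in> E \<and> split_exact B (map_seq LO LM s)"
  unfolding E_L0_def by simp

theorem mainTheorem2:
  fixes A :: "('o, 'm) addcat" and B :: "('p, 'n) addcat"
    and E :: "('o, 'm) sseq set" and F :: "('p, 'n) sseq set"
    and LO :: "'o \<Rightarrow> 'p" and LM :: "'m \<Rightarrow> 'n"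
  assumes "exact_category A E"
    and "exact_category B F"
    and "exact_functor A E B F LO LM"
  shows "exact_category A (E_L0 E B LO LM)"
proof -
  note eA = assms(1) and eB = assms(2)
  define EL where "EL = E_L0 E B LO LM"
  have addA: "additive A" using eA[unfolded exact_category_def, THEN conjunct1] .
  have addB: "additive B" using eB[unfolded exact_category_def, THEN conjunct1] .
  interpret A: padd A using addA unfolding additive_def padd_def by blast
  interpret B: padd B using addB unfolding additive_def padd_def by blast
  have AF: "additive_functor A B LO LM" using assms(3) unfolding exact_functor_def by blast
  have mapF: "\<forall>s\<in>E. map_seq LO LM s \<in> F" using assms(3) unfolding exact_functor_def by blast
  have Fhom: "\<And>a b f. f \<in> Hom A a b \<Longrightarrow> LM f \<in> Hom B (LO a) (LO b)" using AF[unfolded additive_functor_def, THEN conjunct2, THEN conjunct1] by blast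
  have Fid: "\<And>a. a \<in> Ob A \<Longrightarrow> LM (idm A a) = idm B (LO a)" using AF[unfolded additive_functor_def, THEN conjunct2, THEN conjunct2, THEN conjunct1] by blast
  have Fcmp: "\<And>a b c f g. f \<in> Hom A a b \<Longrightarrow> g \<in> Hom A b c \<Longrightarrow> LM (cmp A g f) = cmp B (LM g) (LM f)"
    using AF[unfolded additive_functor_def, THEN conjunct2, THEN conjunct2, THEN conjunct2, THEN conjunct1] by blast
  have kcE: "\<forall>s\<in>E. kc_pair A s" using eA[unfolded exact_category_def, THEN conjunct2, THEN conjunct1] .
  have kcF: "\<forall>s\<in>F. kc_pair B s" using eB[unfolded exact_category_def, THEN conjunct2, THEN conjunct1] .
  have isoE: "\<forall>s \<in> E. \<forall>t. iso_seq A s t \<longrightarrow> t \<in> E" using eA[unfolded exact_category_def, THEN conjunct2, THEN conjunct2, THEN conjunct1] .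
  have E0: "\<forall>a \<in> Ob A. adm_mono A E a a (idm A a)" using eA[unfolded exact_category_def, THEN conjunct2, THEN conjunct2, THEN conjunct2, THEN conjunct1] .
  have E0op: "\<forall>a \<in> Ob A. adm_epi A E a a (idm A a)" using eA[unfolded exact_category_def, THEN conjunct2, THEN conjunct2, THEN conjunct2, THEN conjunct2, THEN conjunct1] .
  have E1: "\<forall>x y w i j. adm_mono A E x y i \<longrightarrow> adm_mono A E y w j \<longrightarrow> adm_mono A E x w (cmp A j i)" using eA[unfolded exact_category_def, THEN conjunct2, THEN conjunct2, THEN conjunct2, THEN conjunct2, THEN conjunct2, THEN conjunct1] .
  have E1op: "\<forall>x y w d e. adm_epi A E x y d \<longrightarrow> adm_epi A E y w e \<longrightarrow> adm_epi A E x w (cmp A e d)" using eA[unfolded exact_category_def, THEN conjunct2, THEN conjunct2, THEN conjunct2, THEN conjunct2, THEN conjunct2, THEN conjunct2, THEN conjunct1] .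
  have E2: "\<forall>x y x' i f. adm_mono A E x y i \<longrightarrow> f \<in> Hom A x x' \<longrightarrow>
        (\<exists>y' i' f'. is_pushout A x y x' y' i f i' f' \<and> adm_mono A E x' y' i')" using eA[unfolded exact_category_def, THEN conjunct2, THEN conjunct2, THEN conjunct2, THEN conjunct2, THEN conjunct2, THEN conjunct2, THEN conjunct2, THEN conjunct1] .
  have E2op: "\<forall>y z z' d f. adm_epi A E y z d \<longrightarrow> f \<in> Hom A z' z \<longrightarrow>
        (\<exists>y' d' f'. is_pullback A y z y' z' d f d' f' \<and> adm_epi A E y' z' d')" using eA[unfolded exact_category_def, THEN conjunct2, THEN conjunct2, THEN conjunct2, THEN conjunct2, THEN conjunct2, THEN conjunct2, THEN conjunct2, THEN conjunct2] .
  have seqE: "i \<in> Hom A x y \<and> d \<in> Hom A y z \<and> is_kernel A x y z i d \<and> is_cokernel A x y z i d"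
    if "(x,y,z,i,d) \<in> E" for x y z i d
  proof -
    have "kc_pair A (x,y,z,i,d)" using kcE that by blast
    then have "is_kernel A x y z i d" "is_cokernel A x y z i d" unfolding kc_pair_def by auto
    then show ?thesis unfolding is_kernel_def by blast
  qed
  have inF: "kc_pair B (LO x, LO y, LO z, LM i, LM d)" if "(x,y,z,i,d) \<in> E" for x y z i d
  proof -
    have "map_seq LO LM (x,y,z,i,d) \<in> F" using mapF that by blast
    then show ?thesis using kcF unfolding map_seq_def by auto
  qed
  have inEL_ret: "(x,y,z,i,d) \<in> EL" if "(x,y,z,i,d) \<in> E" "r \<in> Hom B (LO y) (LO x)"
     "cmp B r (LM i) = idm B (LO x)" for x y z i d r
    unfolding EL_def E_L0_mem map_seq_def prod.case using that B.split_ret[OF inF[OF that(1)]] by blast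
  have inEL_sec: "(x,y,z,i,d) \<in> EL" if "(x,y,z,i,d) \<in> E" "s \<in> Hom B (LO z) (LO y)"
     "cmp B (LM d) s = idm B (LO z)" for x y z i d s
    unfolding EL_def E_L0_mem map_seq_def prod.case using that B.split_sec[OF inF[OF that(1)]] by blast
  have EL_E: "(x,y,z,i,d) \<in> E" if "(x,y,z,i,d) \<in> EL" for x y z i d
    using that unfolding EL_def E_L0_mem by blast
  have EL_ret: "\<exists>r\<in>Hom B (LO y) (LO x). cmp B r (LM i) = idm B (LO x)"
    if "(x,y,z,i,d) \<in> EL" for x y z i d
  proof -
    have "split_exact B (LO x, LO y, LO z, LM i, LM d)" using that unfolding EL_def E_L0_mem map_seq_def by simp
    then show ?thesis using B.split_has(1) by blast
  qed
  have EL_sec: "\<exists>s\<in>Hom B (LO z) (LO y). cmp B (LM d) s = idm B (LO z)"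
    if "(x,y,z,i,d) \<in> EL" for x y z i d
  proof -
    have "split_exact B (LO x, LO y, LO z, LM i, LM d)" using that unfolding EL_def E_L0_mem map_seq_def by simp
    then show ?thesis using B.split_has(2) by blast
  qed
  have P2: "\<forall>s\<in>EL. kc_pair A s" using kcE unfolding EL_def E_L0_def by blast
  have P3: "\<forall>s\<in>EL. \<forall>t. iso_seq A s t \<longrightarrow> t \<in> EL"
  proof (intro ballI allI impI)
    fix s t assume s: "s \<in> EL" and st: "iso_seq A s t"
    obtain x y z i d where sd: "s = (x,y,z,i,d)" by (cases s) auto
    obtain x' y' z' i' d' where td: "t = (x',y',z',i',d')" by (cases t) auto
    have sE: "(x,y,z,i,d) \<in> E" using EL_E s sd by blast
    have tE: "(x',y',z',i',d') \<in> E" using isoE sE st sd td by blast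
    from st obtain a b c where h: "i \<in> Hom A x y" "i' \<in> Hom A x' y'" and ab: "iso A x x' a" "iso A y y' b"
      and cm: "cmp A b i = cmp A i' a"
      unfolding sd td iso_seq_def by auto
    obtain a' where a: "a \<in> Hom A x x'" "a' \<in> Hom A x' x" "cmp A a a' = idm A x'" using ab(1) unfolding iso_def by auto
    obtain b' where b: "b \<in> Hom A y y'" "b' \<in> Hom A y' y" "cmp A b' b = idm A y" using ab(2) unfolding iso_def by auto
    obtain \<rho> where r: "\<rho> \<in> Hom B (LO y) (LO x)" "cmp B \<rho> (LM i) = idm B (LO x)" using EL_ret s sd by blast
    have ob: "x' \<in> Ob A" using A.ab(2)[OF a(1)] .
    have "i' = cmp A i' (idm A x')" using A.id_r[OF h(2)] by simp
    also have "\<dots> = cmp A (cmp A i' a) a'" using a(3) A.assoc[OF a(2) a(1) h(2)] by simp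
    also have "\<dots> = cmp A b (cmp A i a')" using cm A.assoc[OF a(2) h(1) b(1)] by simp
    finally have i': "i' = cmp A b (cmp A i a')" .
    have ia: "cmp A i a' \<in> Hom A x' y" using A.cmp_hom[OF a(2) h(1)] .
    have bi: "cmp A b' i' = cmp A i a'" using i' A.assoc[OF ia b(1) b(2)] b(3) A.id_l[OF ia] by simp
    then have Lbi: "cmp B (LM b') (LM i') = cmp B (LM i) (LM a')" using Fcmp[OF h(2) b(2)] Fcmp[OF a(2) h(1)] by simp
    define r' where "r' = cmp B (LM a) (cmp B \<rho> (LM b'))"
    have r'h: "r' \<in> Hom B (LO y') (LO x')" unfolding r'_def
      using B.cmp_hom[OF B.cmp_hom[OF Fhom[OF b(2)] r(1)] Fhom[OF a(1)]] .
    have "cmp B r' (LM i') = cmp B (LM a) (cmp B \<rho> (cmp B (LM b') (LM i')))"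
      unfolding r'_def using B.assoc[OF Fhom[OF h(2)] B.cmp_hom[OF Fhom[OF b(2)] r(1)] Fhom[OF a(1)]]
        B.assoc[OF Fhom[OF h(2)] Fhom[OF b(2)] r(1)] by simp
    also have "\<dots> = cmp B (LM a) (cmp B (cmp B \<rho> (LM i)) (LM a'))"
      using Lbi B.assoc[OF Fhom[OF a(2)] Fhom[OF h(1)] r(1)] by simp
    also have "\<dots> = idm B (LO x')"
      using r(2) B.id_l[OF Fhom[OF a(2)]] Fcmp[OF a(2) a(1), symmetric] a(3) Fid[OF ob] by simp
    finally have "cmp B r' (LM i') = idm B (LO x')" .
    then show "t \<in> EL" unfolding td using inEL_ret[OF tE r'h] by blast
  qed
  have P4: "\<forall>a\<in>Ob A. adm_mono A EL a a (idm A a)"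
  proof
    fix a assume a: "a \<in> Ob A"
    obtain z d where s: "(a,a,z,idm A a,d) \<in> E" using E0 a unfolding adm_mono_def by blast
    have ob: "LO a \<in> Ob B" using B.ab(1)[OF Fhom[OF A.id_hom[OF a]]] .
    have "(a,a,z,idm A a,d) \<in> EL"
      using inEL_ret[OF s B.id_hom[OF ob]] Fid[OF a] B.id_l[OF B.id_hom[OF ob]] by simp
    then show "adm_mono A EL a a (idm A a)" unfolding adm_mono_def by blast
  qed
  have P5: "\<forall>a\<in>Ob A. adm_epi A EL a a (idm A a)"
  proof
    fix a assume a: "a \<in> Ob A"
    obtain x i where s: "(x,a,a,i,idm A a) \<in> E" using E0op a unfolding adm_epi_def by blast
    have ob: "LO a \<in> Ob B" using B.ab(1)[OF Fhom[OF A.id_hom[OF a]]] .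
    have "(x,a,a,i,idm A a) \<in> EL"
      using inEL_sec[OF s B.id_hom[OF ob]] Fid[OF a] B.id_l[OF B.id_hom[OF ob]] by simp
    then show "adm_epi A EL a a (idm A a)" unfolding adm_epi_def by blast
  qed
  have P6: "\<forall>x y w i j. adm_mono A EL x y i \<longrightarrow> adm_mono A EL y w j \<longrightarrow> adm_mono A EL x w (cmp A j i)"
  proof (intro allI impI)
    fix x y w i j assume m1: "adm_mono A EL x y i" and m2: "adm_mono A EL y w j"
    obtain z d where s1: "(x,y,z,i,d) \<in> EL" using m1 unfolding adm_mono_def by blast
    obtain z' d' where s2: "(y,w,z',j,d') \<in> EL" using m2 unfolding adm_mono_def by blast
    have "adm_mono A E x y i" "adm_mono A E y w j" using EL_E[OF s1] EL_E[OF s2] unfolding adm_mono_def by blast+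
    then have "adm_mono A E x w (cmp A j i)" using E1 by blast
    then obtain z'' e where s3: "(x,w,z'',cmp A j i,e) \<in> E" unfolding adm_mono_def by blast
    have i: "i \<in> Hom A x y" using seqE[OF EL_E[OF s1]] by blast
    have j: "j \<in> Hom A y w" using seqE[OF EL_E[OF s2]] by blast
    obtain \<rho> where r: "\<rho> \<in> Hom B (LO y) (LO x)" "cmp B \<rho> (LM i) = idm B (LO x)" using EL_ret[OF s1] by blast
    obtain \<rho>' where r': "\<rho>' \<in> Hom B (LO w) (LO y)" "cmp B \<rho>' (LM j) = idm B (LO y)" using EL_ret[OF s2] by blast
    have h: "cmp B \<rho> \<rho>' \<in> Hom B (LO w) (LO x)" using B.cmp_hom[OF r'(1) r(1)] .
    have "cmp B (cmp B \<rho> \<rho>') (LM (cmp A j i)) = cmp B \<rho> (cmp B (cmp B \<rho>' (LM j)) (LM i))"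
      using Fcmp[OF i j] B.assoc[OF Fhom[OF i] Fhom[OF j] B.cmp_hom[OF r'(1) r(1)]]
        B.assoc[OF Fhom[OF i] B.cmp_hom[OF Fhom[OF j] r'(1)] r(1)] B.assoc[OF Fhom[OF j] r'(1) r(1)] by simp
    also have "\<dots> = idm B (LO x)" using r'(2) B.id_l[OF Fhom[OF i]] r(2) by simp
    finally have "cmp B (cmp B \<rho> \<rho>') (LM (cmp A j i)) = idm B (LO x)" .
    then show "adm_mono A EL x w (cmp A j i)" unfolding adm_mono_def using inEL_ret[OF s3 h] by blast
  qed
  have P7: "\<forall>x y w d e. adm_epi A EL x y d \<longrightarrow> adm_epi A EL y w e \<longrightarrow> adm_epi A EL x w (cmp A e d)"
  proof (intro allI impI)
    fix x y w d e assume m1: "adm_epi A EL x y d" and m2: "adm_epi A EL y w e"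
    obtain x0 i where s1: "(x0,x,y,i,d) \<in> EL" using m1 unfolding adm_epi_def by blast
    obtain x1 i' where s2: "(x1,y,w,i',e) \<in> EL" using m2 unfolding adm_epi_def by blast
    have "adm_epi A E x y d" "adm_epi A E y w e" using EL_E[OF s1] EL_E[OF s2] unfolding adm_epi_def by blast+
    then have "adm_epi A E x w (cmp A e d)" using E1op by blast
    then obtain x2 k where s3: "(x2,x,w,k,cmp A e d) \<in> E" unfolding adm_epi_def by blast
    have d: "d \<in> Hom A x y" using seqE[OF EL_E[OF s1]] by blast
    have e: "e \<in> Hom A y w" using seqE[OF EL_E[OF s2]] by blast
    obtain \<sigma> where sg: "\<sigma> \<in> Hom B (LO y) (LO x)" "cmp B (LM d) \<sigma> = idm B (LO y)" using EL_sec[OF s1] by blast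
    obtain \<tau> where t: "\<tau> \<in> Hom B (LO w) (LO y)" "cmp B (LM e) \<tau> = idm B (LO w)" using EL_sec[OF s2] by blast
    have h: "cmp B \<sigma> \<tau> \<in> Hom B (LO w) (LO x)" using B.cmp_hom[OF t(1) sg(1)] .
    have "cmp B (LM (cmp A e d)) (cmp B \<sigma> \<tau>) = cmp B (LM e) (cmp B (cmp B (LM d) \<sigma>) \<tau>)"
      using Fcmp[OF d e] B.assoc[OF t(1) sg(1) B.cmp_hom[OF Fhom[OF d] Fhom[OF e]]]
        B.assoc[OF t(1) B.cmp_hom[OF sg(1) Fhom[OF d]] Fhom[OF e]] B.assoc[OF sg(1) Fhom[OF d] Fhom[OF e]] by simp
    also have "\<dots> = idm B (LO w)" using sg(2) B.id_l[OF t(1)] t(2) by simp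
    finally have "cmp B (LM (cmp A e d)) (cmp B \<sigma> \<tau>) = idm B (LO w)" .
    then show "adm_epi A EL x w (cmp A e d)" unfolding adm_epi_def using inEL_sec[OF s3 h] by blast
  qed
  have P8: "\<forall>x y x' i f. adm_mono A EL x y i \<longrightarrow> f \<in> Hom A x x' \<longrightarrow>
        (\<exists>y' i' f'. is_pushout A x y x' y' i f i' f' \<and> adm_mono A EL x' y' i')"
  proof (intro allI impI)
    fix x y x' i f assume m: "adm_mono A EL x y i" and f: "f \<in> Hom A x x'"
    obtain z d where s: "(x,y,z,i,d) \<in> EL" using m unfolding adm_mono_def by blast
    have "adm_mono A E x y i" using EL_E[OF s] unfolding adm_mono_def by blast
    then obtain y' i' f' where po: "is_pushout A x y x' y' i f i' f'" and m': "adm_mono A E x' y' i'"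
      using E2 f by blast
    obtain z'' d'' where s': "(x',y',z'',i',d'') \<in> E" using m' unfolding adm_mono_def by blast
    have i: "i \<in> Hom A x y" "d \<in> Hom A y z" and Q: "is_cokernel A x y z i d" using seqE[OF EL_E[OF s]] by auto
    have i': "i' \<in> Hom A x' y'" "d'' \<in> Hom A y' z''" and Q'': "is_cokernel A x' y' z'' i' d''" using seqE[OF s'] by auto
    have di: "cmp A d i = zro A x z" using Q unfolding is_cokernel_def by blast
    have di': "cmp A d'' i' = zro A x' z''" using Q'' unfolding is_cokernel_def by blast
    note PO = po[unfolded is_pushout_def]
    have f': "f' \<in> Hom A y y'" using PO[THEN conjunct2, THEN conjunct2, THEN conjunct2, THEN conjunct1] .
    have eq: "cmp A f' i = cmp A i' f" using PO[THEN conjunct2, THEN conjunct2, THEN conjunct2, THEN conjunct2, THEN conjunct1] .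
    note UP = PO[THEN conjunct2, THEN conjunct2, THEN conjunct2, THEN conjunct2, THEN conjunct2]
    have ob: "x \<in> Ob A" "y \<in> Ob A" "z \<in> Ob A" "x' \<in> Ob A" "y' \<in> Ob A" "z'' \<in> Ob A"
      using A.ab(1)[OF i(1)] A.ab(2)[OF i(1)] A.ab(2)[OF i(2)] A.ab(1)[OF i'(1)] A.ab(2)[OF i'(1)] A.ab(2)[OF i'(2)] by auto
    obtain \<sigma> where sg: "\<sigma> \<in> Hom B (LO z) (LO y)" "cmp B (LM d) \<sigma> = idm B (LO z)" using EL_sec[OF s] by blast
    have zf: "cmp A (zro A x' z) f = zro A x z" using A.cmp_zro_l[OF f ob(3)] .
    have "\<exists>!u. u \<in> Hom A y' z \<and> cmp A u f' = d \<and> cmp A u i' = zro A x' z"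
      using UP[rule_format, OF ob(3) i(2) A.zro_hom[OF ob(4) ob(3)]] di zf by simp
    then obtain u where u: "u \<in> Hom A y' z" "cmp A u f' = d" "cmp A u i' = zro A x' z" by blast
    note UQ'' = Q''[unfolded is_cokernel_def, THEN conjunct2, THEN conjunct2, THEN conjunct2]
    obtain k where k: "k \<in> Hom A z'' z" "cmp A k d'' = u" using UQ''[rule_format, OF ob(3) u(1) u(3)] by blast
    note UQ = Q[unfolded is_cokernel_def, THEN conjunct2, THEN conjunct2, THEN conjunct2]
    have df: "cmp A d'' f' \<in> Hom A y z''" using A.cmp_hom[OF f' i'(2)] .
    have "cmp A (cmp A d'' f') i = cmp A d'' (cmp A f' i)" using A.assoc[OF i(1) f' i'(2)] by simp
    also have "\<dots> = cmp A (cmp A d'' i') f" using eq A.assoc[OF f i'(1) i'(2)] by simp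
    also have "\<dots> = zro A x z''" using di' A.cmp_zro_l[OF f ob(6)] by simp
    finally have dfi: "cmp A (cmp A d'' f') i = zro A x z''" .
    obtain h where h: "h \<in> Hom A z z''" "cmp A h d = cmp A d'' f'" using UQ[rule_format, OF ob(6) df dfi] by blast
    have zf2: "cmp A (zro A x' z'') f = zro A x z''" using A.cmp_zro_l[OF f ob(6)] .
    have ex: "\<exists>!v. v \<in> Hom A y' z'' \<and> cmp A v f' = cmp A d'' f' \<and> cmp A v i' = zro A x' z''"
      using UP[rule_format, OF ob(6) df A.zro_hom[OF ob(4) ob(6)]] dfi zf2 by simp
    have c1: "cmp A (cmp A h u) f' = cmp A d'' f'" using A.assoc[OF f' u(1) h(1), symmetric] u(2) h(2) by simp
    have c2: "cmp A (cmp A h u) i' = zro A x' z''"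
      using A.assoc[OF i'(1) u(1) h(1), symmetric] u(3) A.cmp_zro_r[OF h(1) ob(4)] by simp
    have c3: "cmp A h u \<in> Hom A y' z''" using A.cmp_hom[OF u(1) h(1)] .
    from ex obtain v0 where "\<forall>v. v \<in> Hom A y' z'' \<and> cmp A v f' = cmp A d'' f' \<and> cmp A v i' = zro A x' z'' \<longrightarrow> v = v0"
      by blast
    then have dhu: "d'' = cmp A h u" using c1 c2 c3 i'(2) di' by metis
    have hk: "cmp A h k = idm A z''"
    proof (rule A.epi[OF Q''])
      show "cmp A h k \<in> Hom A z'' z''" using A.cmp_hom[OF k(1) h(1)] .
      show "idm A z'' \<in> Hom A z'' z''" using A.id_hom[OF ob(6)] .
      show "cmp A (cmp A h k) d'' = cmp A (idm A z'') d''"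
        using A.assoc[OF i'(2) k(1) h(1), symmetric] k(2) dhu[symmetric] A.id_l[OF i'(2)] by simp
    qed
    define \<tau> where "\<tau> = cmp B (LM f') (cmp B \<sigma> (LM k))"
    have sk: "cmp B \<sigma> (LM k) \<in> Hom B (LO z'') (LO y)" using B.cmp_hom[OF Fhom[OF k(1)] sg(1)] .
    have th: "\<tau> \<in> Hom B (LO z'') (LO y')" unfolding \<tau>_def using B.cmp_hom[OF sk Fhom[OF f']] .
    have Lhd: "cmp B (LM d'') (LM f') = cmp B (LM h) (LM d)" using h(2) Fcmp[OF f' i'(2)] Fcmp[OF i(2) h(1)] by metis
    have "cmp B (LM d'') \<tau> = cmp B (cmp B (LM d'') (LM f')) (cmp B \<sigma> (LM k))" unfolding \<tau>_def
      using B.assoc[OF sk Fhom[OF f'] Fhom[OF i'(2)]] by simp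
    also have "\<dots> = cmp B (LM h) (cmp B (cmp B (LM d) \<sigma>) (LM k))"
      using Lhd B.assoc[OF Fhom[OF k(1)] sg(1) B.cmp_hom[OF Fhom[OF i(2)] Fhom[OF h(1)]]]
        B.assoc[OF Fhom[OF k(1)] B.cmp_hom[OF sg(1) Fhom[OF i(2)]] Fhom[OF h(1)]]
        B.assoc[OF sg(1) Fhom[OF i(2)] Fhom[OF h(1)]] by simp
    also have "\<dots> = idm B (LO z'')"
      using sg(2) B.id_l[OF Fhom[OF k(1)]] Fcmp[OF k(1) h(1), symmetric] hk Fid[OF ob(6)] by simp
    finally have "cmp B (LM d'') \<tau> = idm B (LO z'')" .
    then have "adm_mono A EL x' y' i'" unfolding adm_mono_def using inEL_sec[OF s' th] by blast
    then show "\<exists>y' i' f'. is_pushout A x y x' y' i f i' f' \<and> adm_mono A EL x' y' i'" using po by blast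
  qed
  have P9: "\<forall>y z z' d f. adm_epi A EL y z d \<longrightarrow> f \<in> Hom A z' z \<longrightarrow>
        (\<exists>y' d' f'. is_pullback A y z y' z' d f d' f' \<and> adm_epi A EL y' z' d')"
  proof (intro allI impI)
    fix y z z' d f assume m: "adm_epi A EL y z d" and f: "f \<in> Hom A z' z"
    obtain x i where s: "(x,y,z,i,d) \<in> EL" using m unfolding adm_epi_def by blast
    have "adm_epi A E y z d" using EL_E[OF s] unfolding adm_epi_def by blast
    then obtain y' d' f' where pb: "is_pullback A y z y' z' d f d' f'" and m': "adm_epi A E y' z' d'"
      using E2op f by blast
    obtain x'' i'' where s': "(x'',y',z',i'',d') \<in> E" using m' unfolding adm_epi_def by blast
    have i: "i \<in> Hom A x y" "d \<in> Hom A y z" and K: "is_kernel A x y z i d" using seqE[OF EL_E[OF s]] by auto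
    have i'': "i'' \<in> Hom A x'' y'" "d' \<in> Hom A y' z'" and K'': "is_kernel A x'' y' z' i'' d'" using seqE[OF s'] by auto
    have di: "cmp A d i = zro A x z" using K unfolding is_kernel_def by blast
    have di'': "cmp A d' i'' = zro A x'' z'" using K'' unfolding is_kernel_def by blast
    note PB = pb[unfolded is_pullback_def]
    have f': "f' \<in> Hom A y' y" using PB[THEN conjunct2, THEN conjunct2, THEN conjunct2, THEN conjunct1] .
    have eq: "cmp A d f' = cmp A f d'" using PB[THEN conjunct2, THEN conjunct2, THEN conjunct2, THEN conjunct2, THEN conjunct1] .
    note UP = PB[THEN conjunct2, THEN conjunct2, THEN conjunct2, THEN conjunct2, THEN conjunct2]
    have ob: "x \<in> Ob A" "y \<in> Ob A" "z \<in> Ob A" "z' \<in> Ob A" "y' \<in> Ob A" "x'' \<in> Ob A"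
      using A.ab(1)[OF i(1)] A.ab(2)[OF i(1)] A.ab(2)[OF i(2)] A.ab(1)[OF f] A.ab(2)[OF i''(1)] A.ab(1)[OF i''(1)] by auto
    obtain \<rho> where r: "\<rho> \<in> Hom B (LO y) (LO x)" "cmp B \<rho> (LM i) = idm B (LO x)" using EL_ret[OF s] by blast
    have fz: "cmp A f (zro A x z') = zro A x z" using A.cmp_zro_r[OF f ob(1)] .
    have "\<exists>!u. u \<in> Hom A x y' \<and> cmp A f' u = i \<and> cmp A d' u = zro A x z'"
      using UP[rule_format, OF ob(1) i(1) A.zro_hom[OF ob(1) ob(4)]] di fz by simp
    then obtain u where u: "u \<in> Hom A x y'" "cmp A f' u = i" "cmp A d' u = zro A x z'" by blast
    note UK'' = K''[unfolded is_kernel_def, THEN conjunct2, THEN conjunct2, THEN conjunct2]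
    obtain k where k: "k \<in> Hom A x x''" "cmp A i'' k = u" using UK''[rule_format, OF ob(1) u(1) u(3)] by blast
    note UK = K[unfolded is_kernel_def, THEN conjunct2, THEN conjunct2, THEN conjunct2]
    have fi: "cmp A f' i'' \<in> Hom A x'' y" using A.cmp_hom[OF i''(1) f'] .
    have "cmp A d (cmp A f' i'') = cmp A (cmp A d f') i''" using A.assoc[OF i''(1) f' i(2)] by simp
    also have "\<dots> = cmp A f (cmp A d' i'')" using eq A.assoc[OF i''(1) i''(2) f] by simp
    also have "\<dots> = zro A x'' z" using di'' A.cmp_zro_r[OF f ob(6)] by simp
    finally have dfi: "cmp A d (cmp A f' i'') = zro A x'' z" .
    obtain h where h: "h \<in> Hom A x'' x" "cmp A i h = cmp A f' i''" using UK[rule_format, OF ob(6) fi dfi] by blast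
    have fz2: "cmp A f (zro A x'' z') = zro A x'' z" using A.cmp_zro_r[OF f ob(6)] .
    have ex: "\<exists>!v. v \<in> Hom A x'' y' \<and> cmp A f' v = cmp A f' i'' \<and> cmp A d' v = zro A x'' z'"
      using UP[rule_format, OF ob(6) fi A.zro_hom[OF ob(6) ob(4)]] dfi fz2 by simp
    have c1: "cmp A f' (cmp A u h) = cmp A f' i''" using A.assoc[OF h(1) u(1) f'] u(2) h(2) by simp
    have c2: "cmp A d' (cmp A u h) = zro A x'' z'"
      using A.assoc[OF h(1) u(1) i''(2)] u(3) A.cmp_zro_l[OF h(1) ob(4)] by simp
    have c3: "cmp A u h \<in> Hom A x'' y'" using A.cmp_hom[OF h(1) u(1)] .
    from ex obtain v0 where "\<forall>v. v \<in> Hom A x'' y' \<and> cmp A f' v = cmp A f' i'' \<and> cmp A d' v = zro A x'' z' \<longrightarrow> v = v0"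
      by blast
    then have iuh: "i'' = cmp A u h" using c1 c2 c3 i''(1) di'' by metis
    have kh: "cmp A k h = idm A x''"
    proof (rule A.mono[OF K''])
      show "cmp A k h \<in> Hom A x'' x''" using A.cmp_hom[OF h(1) k(1)] .
      show "idm A x'' \<in> Hom A x'' x''" using A.id_hom[OF ob(6)] .
      show "cmp A i'' (cmp A k h) = cmp A i'' (idm A x'')"
        using A.assoc[OF h(1) k(1) i''(1)] k(2) iuh[symmetric] A.id_r[OF i''(1)] by simp
    qed
    define \<rho>' where "\<rho>' = cmp B (LM k) (cmp B \<rho> (LM f'))"
    have rf: "cmp B \<rho> (LM f') \<in> Hom B (LO y') (LO x)" using B.cmp_hom[OF Fhom[OF f'] r(1)] .
    have rh: "\<rho>' \<in> Hom B (LO y') (LO x'')" unfolding \<rho>'_def using B.cmp_hom[OF rf Fhom[OF k(1)]] .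
    have Lfi: "cmp B (LM f') (LM i'') = cmp B (LM i) (LM h)" using h(2) Fcmp[OF i''(1) f'] Fcmp[OF h(1) i(1)] by metis
    have "cmp B \<rho>' (LM i'') = cmp B (LM k) (cmp B \<rho> (cmp B (LM f') (LM i'')))" unfolding \<rho>'_def
      using B.assoc[OF Fhom[OF f'] r(1) Fhom[OF k(1)]] B.assoc[OF Fhom[OF i''(1)] Fhom[OF f'] r(1)]
        B.assoc[OF Fhom[OF i''(1)] rf Fhom[OF k(1)]] by simp
    also have "\<dots> = cmp B (LM k) (cmp B (cmp B \<rho> (LM i)) (LM h))"
      using Lfi B.assoc[OF Fhom[OF h(1)] Fhom[OF i(1)] r(1)] by simp
    also have "\<dots> = idm B (LO x'')"
      using r(2) B.id_l[OF Fhom[OF h(1)]] Fcmp[OF h(1) k(1), symmetric] kh Fid[OF ob(6)] by simp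
    finally have "cmp B \<rho>' (LM i'') = idm B (LO x'')" .
    then have "adm_epi A EL y' z' d'" unfolding adm_epi_def using inEL_ret[OF s' rh] by blast
    then show "\<exists>y' d' f'. is_pullback A y z y' z' d f d' f' \<and> adm_epi A EL y' z' d'" using pb by blast
  qed
  show ?thesis unfolding exact_category_def EL_def[symmetric]
    using addA P2 P3 P4 P5 P6 P7 P8 P9 by (intro conjI)
qed

end
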